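(* Let $\mathtt{L}=\{x,(x,u'),u'\}$ be a line of $\mathbb{S}$, where $(x,u')\in\mathcal{P}$, and let $\alpha$ be a point of $\mathbb{S}$ not on $\mathtt{L}$. Then there is exactly one point of $\mathtt{L}$ nearest to $\alpha$ (in the collinearity graph of $\mathbb{S}$).
   Context: Let $S=(P,L)$ and $S'=(P',L')$ be generalized quadrangles of order $(2,2)$ (every line has 3 points, every point lies on 3 lines, and for each point $x$ and line $l\not\ni x$ exactly one point of $l$ is collinear with $x$), with an isomorphism $x\mapsto x'$ from $S$ to $S'$. In a point-line geometry, $x^{\perp}$ is $x$ together with all points collinear with $x$, and $A^{\perp}=\bigcap_{a\in A}a^{\perp}$. A triad is a set of three pairwise non-collinear points, complete if $|T^{\perp}|=3$. Let $\mathcal{P}=\{(x,y')\in P\times P':y'\in x'^{\perp}\}$ and $\mathcal{L}$ the set of all $3$-subsets $\{(x,u'),(y,v'),(z,w')\}$ of $\mathcal{P}$ where $T=\{x,y,z\}$ (three distinct points) is a line or complete triad of $S$ and $\{u',v',w'\}=T'^{\perp}$ in $S'$ with $u',v',w'$ distinct. The geometry $\mathbb{S}=(\mathbb{P},\mathbb{L})$ has point set $\mathbb{P}=\mathcal{P}\cup P\cup P'$ (disjoint union) and line set $\mathcal{L}\cup\{\{x,(x,u'),u'\}:(x,u')\in\mathcal{P}\}$. *)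

theory Defs
  imports Main "HOL-Library.Extended_Nat"
begin

definition collinear :: "'a set \<Rightarrow> 'a set set \<Rightarrow> 'a \<Rightarrow> 'a \<Rightarrow> bool" where
  "collinear P L x y \<longleftrightarrow> x \<noteq> y \<and> x \<in> P \<and> y \<in> P \<and> (\<exists>l\<in>L. x \<in> l \<and> y \<in> l)"

definition perp :: "'a set \<Rightarrow> 'a set set \<Rightarrow> 'a \<Rightarrow> 'a set" where
  "perp P L x = {y \<in> P. y = x \<or> collinear P L x y}"

definition perpset :: "'a set \<Rightarrow> 'a set set \<Rightarrow> 'a set \<Rightarrow> 'a set" where
  "perpset P L A = {y \<in> P. \<forall>a\<in>A. y \<in> perp P L a}"

definition GQ22 :: "'a set \<Rightarrow> 'a set set \<Rightarrow> bool" where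
  "GQ22 P L \<longleftrightarrow> (\<forall>l\<in>L. l \<subseteq> P \<and> card l = 3)
     \<and> (\<forall>x\<in>P. card {l\<in>L. x \<in> l} = 3)
     \<and> (\<forall>x\<in>P. \<forall>l\<in>L. x \<notin> l \<longrightarrow> (\<exists>!y. y \<in> l \<and> collinear P L x y))"

definition geom_iso :: "('a \<Rightarrow> 'b) \<Rightarrow> 'a set \<Rightarrow> 'a set set \<Rightarrow> 'b set \<Rightarrow> 'b set set \<Rightarrow> bool" where
  "geom_iso f P L P' L' \<longleftrightarrow> bij_betw f P P' \<and> (image f) ` L = L'"

definition triad :: "'a set \<Rightarrow> 'a set set \<Rightarrow> 'a set \<Rightarrow> bool" where
  "triad P L T \<longleftrightarrow> T \<subseteq> P \<and> card T = 3 \<and> (\<forall>a\<in>T. \<forall>b\<in>T. a \<noteq> b \<longrightarrow> \<not> collinear P L a b)"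

definition complete_triad :: "'a set \<Rightarrow> 'a set set \<Rightarrow> 'a set \<Rightarrow> bool" where
  "complete_triad P L T \<longleftrightarrow> triad P L T \<and> card (perpset P L T) = 3"

datatype ('a, 'b) spoint = PP 'a 'b | PA 'a | PB 'b

definition calP :: "'a set \<Rightarrow> 'b set \<Rightarrow> 'b set set \<Rightarrow> ('a \<Rightarrow> 'b) \<Rightarrow> ('a \<times> 'b) set" where
  "calP P P' L' f = {(x, y). x \<in> P \<and> y \<in> perp P' L' (f x)}"

definition calL :: "'a set \<Rightarrow> 'a set set \<Rightarrow> 'b set \<Rightarrow> 'b set set \<Rightarrow> ('a \<Rightarrow> 'b)
    \<Rightarrow> ('a, 'b) spoint set set" where
  "calL P L P' L' f = {{PP x u, PP y v, PP z w} | x y z u v w.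
      (x, u) \<in> calP P P' L' f \<and> (y, v) \<in> calP P P' L' f \<and> (z, w) \<in> calP P P' L' f
      \<and> x \<noteq> y \<and> y \<noteq> z \<and> x \<noteq> z
      \<and> ({x, y, z} \<in> L \<or> complete_triad P L {x, y, z})
      \<and> {u, v, w} = perpset P' L' (f ` {x, y, z})
      \<and> u \<noteq> v \<and> v \<noteq> w \<and> u \<noteq> w}"

definition bbP :: "'a set \<Rightarrow> 'b set \<Rightarrow> 'b set set \<Rightarrow> ('a \<Rightarrow> 'b) \<Rightarrow> ('a, 'b) spoint set" where
  "bbP P P' L' f = (\<lambda>(x, y). PP x y) ` calP P P' L' f \<union> PA ` P \<union> PB ` P'"

definition bbL :: "'a set \<Rightarrow> 'a set set \<Rightarrow> 'b set \<Rightarrow> 'b set set \<Rightarrow> ('a \<Rightarrow> 'b)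
    \<Rightarrow> ('a, 'b) spoint set set" where
  "bbL P L P' L' f = calL P L P' L' f
     \<union> {{PA x, PP x u, PB u} | x u. (x, u) \<in> calP P P' L' f}"

definition coll_rel :: "'a set \<Rightarrow> 'a set set \<Rightarrow> ('a \<times> 'a) set" where
  "coll_rel P L = {(x, y). collinear P L x y}"

text \<open>Graph distance (infinite if no path exists).\<close>
definition gdist :: "'a set \<Rightarrow> 'a set set \<Rightarrow> 'a \<Rightarrow> 'a \<Rightarrow> enat" where
  "gdist P L a b = (INF n \<in> {n. (a, b) \<in> coll_rel P L ^^ n}. enat n)"

end

theory Submission
  imports Defs
begin

locale gq =
  fixes P :: "'a set" and L :: "'a set set"
  assumes gq: "GQ22 P L"
begin

abbreviation col where "col \<equiv> collinear P L"
definition R :: "'a \<Rightarrow> 'a \<Rightarrow> bool" where "R a b \<longleftrightarrow> b \<in> perp P L a"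

lemma line_sub: "l \<in> L \<Longrightarrow> l \<subseteq> P" using gq unfolding GQ22_def by blast
lemma line_card: "l \<in> L \<Longrightarrow> card l = 3" using gq unfolding GQ22_def by blast
lemma lines_through_card: "a \<in> P \<Longrightarrow> card {l\<in>L. a \<in> l} = 3" using gq unfolding GQ22_def by blast
lemma ax: assumes "a \<in> P" "l \<in> L" "a \<notin> l" shows "\<exists>!y. y \<in> l \<and> col a y"
proof -
  have "\<forall>x\<in>P. \<forall>l\<in>L. x \<notin> l \<longrightarrow> (\<exists>!y. y \<in> l \<and> col x y)"
    using gq unfolding GQ22_def by (rule conjunct2[OF conjunct2])
  then have "\<forall>l\<in>L. a \<notin> l \<longrightarrow> (\<exists>!y. y \<in> l \<and> col a y)" using assms(1) by (rule bspec)
  then have "a \<notin> l \<longrightarrow> (\<exists>!y. y \<in> l \<and> col a y)" using assms(2) by (rule bspec)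
  then show ?thesis using assms(3) by (rule mp)
qed

lemma col_iff: "col a b \<longleftrightarrow> a \<noteq> b \<and> a\<in>P \<and> b\<in>P \<and> (\<exists>l\<in>L. a\<in>l \<and> b\<in>l)"
  by (simp add: collinear_def)
lemma col_sym: "col a b \<Longrightarrow> col b a" unfolding col_iff by blast
lemma R_iff: "R a b \<longleftrightarrow> a \<in> P \<and> b \<in> P \<and> (a = b \<or> col a b)"
  unfolding R_def perp_def col_iff by blast
lemma R_sym: "R a b \<Longrightarrow> R b a" unfolding R_iff col_iff by blast
lemma R_refl: "a\<in>P \<Longrightarrow> R a a" unfolding R_iff by blast
lemma R_line: "l\<in>L \<Longrightarrow> a\<in>l \<Longrightarrow> b\<in>l \<Longrightarrow> R a b"
  using line_sub unfolding R_iff col_iff by blast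
lemma col_line: "l\<in>L \<Longrightarrow> a\<in>l \<Longrightarrow> b\<in>l \<Longrightarrow> a \<noteq> b \<Longrightarrow> col a b"
  using line_sub unfolding col_iff by blast
lemma ax_unique: "l\<in>L \<Longrightarrow> c \<in> P \<Longrightarrow> c\<notin>l \<Longrightarrow> a\<in>l \<Longrightarrow> b\<in>l \<Longrightarrow> col c a \<Longrightarrow> col c b \<Longrightarrow> a = b"
  using ax by blast
lemma ax_ex: "l\<in>L \<Longrightarrow> c \<in> P \<Longrightarrow> c\<notin>l \<Longrightarrow> \<exists>y\<in>l. col c y"
  using ax by blast
lemma line_three: "l \<in> L \<Longrightarrow> \<exists>a b c. l = {a,b,c} \<and> a\<noteq>b \<and> a\<noteq>c \<and> b\<noteq>c"
proof -
  assume "l \<in> L"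
  then have "card l = 3" by (rule line_card)
  then show ?thesis unfolding card_3_iff by blast
qed
lemma third: "l\<in>L \<Longrightarrow> \<exists>c\<in>l. c\<noteq>a \<and> c\<noteq>b"
proof -
  assume "l \<in> L"
  then obtain x y z where "l = {x,y,z}" "x\<noteq>y" "x\<noteq>z" "y\<noteq>z" using line_three by blast
  then show ?thesis by auto
qed

lemma uline: "l1\<in>L \<Longrightarrow> l2\<in>L \<Longrightarrow> a\<in>l1 \<Longrightarrow> b\<in>l1 \<Longrightarrow> a\<in>l2 \<Longrightarrow> b\<in>l2 \<Longrightarrow> a\<noteq>b \<Longrightarrow> l1 = l2"
proof (rule ccontr)
  assume h: "l1\<in>L" "l2\<in>L" "a\<in>l1" "b\<in>l1" "a\<in>l2" "b\<in>l2" "a\<noteq>b" "l1\<noteq>l2"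
  have "\<not> l2 \<subseteq> l1"
  proof
    assume "l2 \<subseteq> l1"
    moreover have "finite l1" using line_card[OF h(1)] by (intro card_ge_0_finite) simp
    ultimately have "l2 = l1" using card_subset_eq line_card h(1,2) by metis
    then show False using h(8) by simp
  qed
  then obtain c where c: "c \<in> l2" "c \<notin> l1" by blast
  have "c \<in> P" using c line_sub h by blast
  have "c\<noteq>a" "c\<noteq>b" using c h by auto
  then have "col c a" "col c b" using col_line h c by auto
  then show False using ax_unique[OF h(1) \<open>c\<in>P\<close> c(2) h(3) h(4)] h(7) by blast
qed

lemma G4: "l\<in>L \<Longrightarrow> a\<in>l \<Longrightarrow> b\<in>l \<Longrightarrow> a\<noteq>b \<Longrightarrow> R a c \<Longrightarrow> R b c \<Longrightarrow> c \<in> l"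
proof (rule ccontr)
  assume h: "l\<in>L" "a\<in>l" "b\<in>l" "a\<noteq>b" "R a c" "R b c" "c \<notin> l"
  then have "c \<in> P" "c \<noteq> a" "c\<noteq>b" unfolding R_iff by auto
  then have "col c a" "col c b" using h unfolding R_iff using col_sym by auto
  then show False using ax_unique[OF h(1) \<open>c\<in>P\<close> h(7) h(2) h(3)] h(4) by blast
qed

lemma perpset_line: "l\<in>L \<Longrightarrow> perpset P L l = l"
proof -
  assume l: "l \<in> L"
  obtain a b c where abc: "l = {a,b,c}" "a\<noteq>b" "a\<noteq>c" "b\<noteq>c" using line_three l by blast
  show ?thesis
  proof
    show "perpset P L l \<subseteq> l"
    proof
      fix y assume "y \<in> perpset P L l"
      then have "R a y" "R b y" unfolding perpset_def R_def abc by auto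
      then show "y \<in> l" using G4[OF l] abc by auto
    qed
    show "l \<subseteq> perpset P L l" using R_line[OF l] line_sub[OF l] unfolding perpset_def R_def by blast
  qed
qed

lemma col_line_ex: "col a c \<Longrightarrow> \<exists>l\<in>L. a\<in>l \<and> c\<in>l" unfolding col_iff by blast
lemma col_R: "col a c \<Longrightarrow> R a c" unfolding R_iff col_iff by blast
lemma R_col: "R a c \<Longrightarrow> a \<noteq> c \<Longrightarrow> col a c" unfolding R_iff by blast
lemma R_P: "R a c \<Longrightarrow> a \<in> P \<and> c \<in> P" unfolding R_iff by blast

lemma line_through: "a\<in>P \<Longrightarrow> \<exists>l\<in>L. a\<in>l"
proof (rule ccontr)
  assume "a \<in> P" "\<not> (\<exists>l\<in>L. a\<in>l)"
  then have e: "{l\<in>L. a \<in> l} = {}" by blast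
  have "card {l\<in>L. a \<in> l} = 3" using lines_through_card[OF \<open>a\<in>P\<close>] .
  then show False unfolding e by simp
qed

lemma G5: "a\<in>P \<Longrightarrow> b\<in>P \<Longrightarrow> \<exists>c. R a c \<and> R b c"
proof -
  assume a: "a\<in>P" and b: "b\<in>P"
  show ?thesis
  proof (cases "R a b")
    case True then show ?thesis using R_refl b by blast
  next
    case False
    obtain l where l: "l\<in>L" "a\<in>l" using line_through a by blast
    have "b \<notin> l" using False R_line l by blast
    then obtain c where "c\<in>l" "col b c" using ax_ex l b by blast
    then show ?thesis using R_line[OF l(1) l(2) \<open>c\<in>l\<close>] col_R[OF \<open>col b c\<close>] by blast
  qed
qed

lemma third_line: "a\<in>P \<Longrightarrow> \<exists>m\<in>L. a\<in>m \<and> m\<noteq>l1 \<and> m\<noteq>l2"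
proof (rule ccontr)
  assume a: "a\<in>P" and n: "\<not> (\<exists>m\<in>L. a\<in>m \<and> m\<noteq>l1 \<and> m\<noteq>l2)"
  then have "{l\<in>L. a \<in> l} \<subseteq> {l1,l2}" by blast
  then have "card {l\<in>L. a \<in> l} \<le> card {l1,l2}" by (intro card_mono) auto
  moreover have "card {l1,l2} \<le> 2" by (cases "l1=l2") auto
  ultimately have "card {l\<in>L. a \<in> l} \<le> 2" by linarith
  then show False using lines_through_card[OF a] by simp
qed

lemma G6: assumes a: "a\<in>P" and b: "b\<in>P" and nab: "\<not> R a b"
  shows "finite {c. R a c \<and> R b c} \<and> card {c. R a c \<and> R b c} \<le> 3"
proof -
  define S where "S = {c. R a c \<and> R b c}"
  define g where "g c = (SOME l. l\<in>L \<and> a\<in>l \<and> c\<in>l)" for c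
  have g: "g c \<in> L \<and> a \<in> g c \<and> c \<in> g c" if "c \<in> S" for c
  proof -
    have "R a c" "R b c" using that unfolding S_def by auto
    have "c \<noteq> a" using \<open>R b c\<close> nab R_sym by blast
    then have "col a c" using \<open>R a c\<close> R_col by blast
    then have "\<exists>l. l\<in>L \<and> a\<in>l \<and> c\<in>l" using col_line_ex by blast
    then show ?thesis unfolding g_def by (rule someI_ex)
  qed
  have inj: "inj_on g S"
  proof (rule inj_onI)
    fix c1 c2 assume c: "c1 \<in> S" "c2 \<in> S" "g c1 = g c2"
    show "c1 = c2"
    proof (rule ccontr)
      assume ne: "c1 \<noteq> c2"
      have l1: "g c1 \<in> L \<and> a \<in> g c1 \<and> c1 \<in> g c1" by (rule g[OF c(1)])
      have l2: "c2 \<in> g c1" using g[OF c(2)] c(3) by simp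
      have "b \<notin> g c1"
      proof
        assume "b \<in> g c1" then have "R a b" using R_line l1 by blast
        then show False using nab by simp
      qed
      have r: "R b c1" "R b c2" using c unfolding S_def by auto
      have "b \<noteq> c1" "b \<noteq> c2" using c(1,2) nab unfolding S_def by auto
      then have "col b c1" "col b c2" using r R_col by auto
      then show False using ax_unique[OF conjunct1[OF l1] b \<open>b\<notin>g c1\<close> _ l2] l1 ne by blast
    qed
  qed
  have sub: "g ` S \<subseteq> {l\<in>L. a \<in> l}"
  proof (rule image_subsetI)
    fix c assume "c \<in> S" then show "g c \<in> {l\<in>L. a \<in> l}" using g[OF \<open>c\<in>S\<close>] by simp
  qed
  have fin: "finite {l\<in>L. a \<in> l}" using lines_through_card[OF a] by (intro card_ge_0_finite) simp
  have "card S \<le> 3" using card_inj_on_le[OF inj sub fin] lines_through_card[OF a] by simp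
  moreover have "finite S"
  proof -
    have "finite (g ` S)" by (rule finite_subset[OF sub fin])
    then show ?thesis using finite_imageD inj by blast
  qed
  ultimately show ?thesis using S_def by simp
qed

lemma nR: "\<not> R a b \<Longrightarrow> R a p \<Longrightarrow> R b p \<Longrightarrow> R a q \<Longrightarrow> R b q \<Longrightarrow> p \<noteq> q \<Longrightarrow> \<not> R p q"
proof
  assume h: "\<not> R a b" "R a p" "R b p" "R a q" "R b q" "p \<noteq> q" "R p q"
  obtain l where l: "l\<in>L" "p\<in>l" "q\<in>l" using col_line_ex R_col h by blast
  have "a \<in> l" "b \<in> l" using G4[OF l h(6)] h R_sym by blast+
  then show False using R_line l h by blast
qed

lemma G7: assumes a: "a\<in>P" and b: "b\<in>P" and nab: "\<not> R a b"
  and h: "R a u" "R b u" "R a w" "R b w" "u \<noteq> w"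
  shows "\<exists>s. R a s \<and> R b s \<and> s\<noteq>u \<and> s\<noteq>w"
proof -
  have "u \<noteq> a" "w \<noteq> a" using h nab R_sym by blast+
  have "col a u" "col a w" using R_col h \<open>u \<noteq> a\<close> \<open>w \<noteq> a\<close> by auto
  then obtain lu lw where l: "lu\<in>L" "a\<in>lu" "u\<in>lu" "lw\<in>L" "a\<in>lw" "w\<in>lw"
    using col_line_ex by meson
  obtain m where m: "m\<in>L" "a\<in>m" "m\<noteq>lu" "m\<noteq>lw" using third_line a by blast
  have "b\<notin>m" using R_line m nab by blast
  then obtain s where s: "s\<in>m" "col b s" using ax_ex m b by blast
  have "s \<noteq> u"
  proof
    assume "s = u"
    then have "m = lu" using uline[OF m(1) l(1) m(2) _ l(2) l(3)] s(1) \<open>u\<noteq>a\<close> by metis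
    then show False using m by simp
  qed
  moreover have "s \<noteq> w"
  proof
    assume "s = w"
    then have "m = lw" using uline[OF m(1) l(4) m(2) _ l(5) l(6)] s(1) \<open>w\<noteq>a\<close> by metis
    then show False using m by simp
  qed
  ultimately show ?thesis using R_line m s col_R by blast
qed

lemma E3: assumes a: "a\<in>P" and b: "b\<in>P" and nab: "\<not> R a b"
  and pqr: "p\<noteq>q" "p\<noteq>r" "q\<noteq>r"
  and h: "R a p" "R b p" "R a q" "R b q" "R a r" "R b r"
  shows "\<exists>c. c\<noteq>a \<and> c\<noteq>b \<and> R c p \<and> R c q \<and> R c r"
proof -
  have nab': "\<not> R b a" using nab R_sym by blast
  have npq: "\<not> R p q" by (rule nR[OF nab h(1-4) pqr(1)])
  have npr: "\<not> R p r" by (rule nR[OF nab h(1,2,5,6) pqr(2)])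
  have nqr: "\<not> R q r" by (rule nR[OF nab h(3-6) pqr(3)])
  have rP: "r \<in> P" using R_P h(5) by blast
  have "p \<noteq> a" using h(2) nab' by blast
  have "p \<noteq> b" using h(1) nab by blast
  have "r \<noteq> a" using h(6) nab' by blast
  have "r \<noteq> b" using h(5) nab by blast
  have "col p a" using R_col R_sym h(1) \<open>p\<noteq>a\<close> by blast
  then obtain la where la: "la\<in>L" "p\<in>la" "a\<in>la" using col_line_ex by blast
  have "col p b" using R_col R_sym h(2) \<open>p\<noteq>b\<close> by blast
  then obtain lb where lb: "lb\<in>L" "p\<in>lb" "b\<in>lb" using col_line_ex by blast
  have pP: "p \<in> P" using R_P h(1) by blast
  obtain m where m: "m\<in>L" "p\<in>m" "m\<noteq>la" "m\<noteq>lb" using third_line pP by blast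
  have "a \<notin> m"
  proof
    assume "a \<in> m" then have "m = la" using uline[OF m(1) la(1) m(2) _ la(2) la(3)] \<open>p\<noteq>a\<close> by blast
    then show False using m(3) by simp
  qed
  have "b \<notin> m"
  proof
    assume "b \<in> m" then have "m = lb" using uline[OF m(1) lb(1) m(2) _ lb(2) lb(3)] \<open>p\<noteq>b\<close> by blast
    then show False using m(4) by simp
  qed
  have qP: "q \<in> P" using R_P h(3) by blast
  have "q \<notin> m" using R_line[OF m(1) m(2)] npq by blast
  have "r \<notin> m" using R_line[OF m(1) m(2)] npr by blast
  obtain s where s: "s\<in>m" "col q s" using ax_ex[OF m(1) qP \<open>q\<notin>m\<close>] by blast
  obtain s' where s': "s'\<in>m" "col r s'" using ax_ex[OF m(1) rP \<open>r\<notin>m\<close>] by blast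
  have "s \<noteq> p" using s(2) col_R R_sym npq by blast
  have "s' \<noteq> p" using s'(2) col_R R_sym npr by blast
  show ?thesis
  proof (cases "s = s'")
    case True
    have "s \<noteq> a" using \<open>a\<notin>m\<close> s(1) by blast
    moreover have "s \<noteq> b" using \<open>b\<notin>m\<close> s(1) by blast
    moreover have "R s p" using R_line[OF m(1) s(1) m(2)] .
    moreover have "R s q" using col_R[OF s(2)] R_sym by blast
    moreover have "R s r" using col_R[OF s'(2)] R_sym True by blast
    ultimately show ?thesis by blast
  next
    case False
    obtain n where n: "n\<in>L" "q\<in>n" "s\<in>n" using col_line_ex[OF s(2)] by blast
    have "r \<notin> n" using R_line[OF n(1) n(2)] nqr by blast
    obtain s3 where s3: "s3\<in>n" "col r s3" using ax_ex[OF n(1) rP \<open>r\<notin>n\<close>] by blast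
    have "s3 \<noteq> q" using s3(2) col_R R_sym nqr by blast
    have "s3 \<noteq> s"
    proof
      assume "s3 = s"
      then have "s = s'" using ax_unique[OF m(1) rP \<open>r\<notin>m\<close> s(1) s'(1)] s3(2) s'(2) by blast
      then show False using False by simp
    qed
    have "s' \<noteq> s3"
    proof
      assume "s' = s3"
      then have "m = n" using uline[OF m(1) n(1) s(1) s'(1) n(3)] s3(1) False by blast
      then show False using \<open>q\<notin>m\<close> n(2) by blast
    qed
    have "a \<notin> n"
    proof
      assume "a \<in> n"
      have "a \<noteq> s" using \<open>a\<notin>m\<close> s(1) by blast
      then have "col a s" using col_line[OF n(1) \<open>a\<in>n\<close> n(3)] by blast
      moreover have "col a p" using \<open>col p a\<close> col_sym by blast
      ultimately have "s = p" using ax_unique[OF m(1) a \<open>a\<notin>m\<close> s(1) m(2)] by blast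
      then show False using \<open>s\<noteq>p\<close> by simp
    qed
    have "b \<notin> n"
    proof
      assume "b \<in> n"
      have "b \<noteq> s" using \<open>b\<notin>m\<close> s(1) by blast
      then have "col b s" using col_line[OF n(1) \<open>b\<in>n\<close> n(3)] by blast
      moreover have "col b p" using \<open>col p b\<close> col_sym by blast
      ultimately have "s = p" using ax_unique[OF m(1) b \<open>b\<notin>m\<close> s(1) m(2)] by blast
      then show False using \<open>s\<noteq>p\<close> by simp
    qed
    have "col r a" using R_col R_sym h(5) \<open>r\<noteq>a\<close> by blast
    then obtain la' where la': "la'\<in>L" "r\<in>la'" "a\<in>la'" using col_line_ex by blast
    have "col r b" using R_col R_sym h(6) \<open>r\<noteq>b\<close> by blast
    then obtain lb' where lb': "lb'\<in>L" "r\<in>lb'" "b\<in>lb'" using col_line_ex by blast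
    obtain m' where m': "m'\<in>L" "r\<in>m'" "s'\<in>m'" using col_line_ex[OF s'(2)] by blast
    obtain n' where n': "n'\<in>L" "r\<in>n'" "s3\<in>n'" using col_line_ex[OF s3(2)] by blast
    have d1: "la' \<noteq> lb'"
    proof
      assume "la' = lb'" then have "R a b" using R_line[OF la'(1) la'(3)] lb'(3) by simp
      then show False using nab by simp
    qed
    have "a \<noteq> s'" using \<open>a\<notin>m\<close> s'(1) by blast
    have "b \<noteq> s'" using \<open>b\<notin>m\<close> s'(1) by blast
    have d2: "la' \<noteq> m'"
    proof
      assume "la' = m'"
      then have "col a s'" using col_line[OF m'(1) _ m'(3) \<open>a\<noteq>s'\<close>] la'(3) by simp
      moreover have "col a p" using \<open>col p a\<close> col_sym by blast
      ultimately have "s' = p" using ax_unique[OF m(1) a \<open>a\<notin>m\<close> s'(1) m(2)] by blast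
      then show False using \<open>s'\<noteq>p\<close> by simp
    qed
    have d3: "lb' \<noteq> m'"
    proof
      assume "lb' = m'"
      then have "col b s'" using col_line[OF m'(1) _ m'(3) \<open>b\<noteq>s'\<close>] lb'(3) by simp
      moreover have "col b p" using \<open>col p b\<close> col_sym by blast
      ultimately have "s' = p" using ax_unique[OF m(1) b \<open>b\<notin>m\<close> s'(1) m(2)] by blast
      then show False using \<open>s'\<noteq>p\<close> by simp
    qed
    have "a \<noteq> s3" using \<open>a\<notin>n\<close> s3(1) by blast
    have "b \<noteq> s3" using \<open>b\<notin>n\<close> s3(1) by blast
    have d4: "la' \<noteq> n'"
    proof
      assume "la' = n'"
      then have "col a s3" using col_line[OF n'(1) _ n'(3) \<open>a\<noteq>s3\<close>] la'(3) by simp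
      moreover have "col a q" using R_col h(3) \<open>q\<notin>m\<close> \<open>a\<notin>n\<close> n(2) by blast
      ultimately have "s3 = q" using ax_unique[OF n(1) a \<open>a\<notin>n\<close> s3(1) n(2)] by blast
      then show False using \<open>s3\<noteq>q\<close> by simp
    qed
    have d5: "lb' \<noteq> n'"
    proof
      assume "lb' = n'"
      then have "col b s3" using col_line[OF n'(1) _ n'(3) \<open>b\<noteq>s3\<close>] lb'(3) by simp
      moreover have "col b q" using R_col h(4) \<open>b\<notin>n\<close> n(2) by blast
      ultimately have "s3 = q" using ax_unique[OF n(1) b \<open>b\<notin>n\<close> s3(1) n(2)] by blast
      then show False using \<open>s3\<noteq>q\<close> by simp
    qed
    have d6: "m' \<noteq> n'"
    proof
      assume "m' = n'"
      have sP: "s \<in> P" using s(1) m(1) line_sub by blast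
      have "s \<notin> m'"
      proof
        assume "s \<in> m'"
        then have "m' = m" using uline[OF m'(1) m(1) \<open>s\<in>m'\<close> m'(3) s(1) s'(1)] False by blast
        then show False using m'(2) \<open>r\<notin>m\<close> by blast
      qed
      have "col s s'" using col_line[OF m(1) s(1) s'(1) False] .
      moreover have "col s s3" using col_line[OF n(1) n(3) s3(1)] \<open>s3\<noteq>s\<close> by blast
      ultimately have "s' = s3" using ax_unique[OF m'(1) sP \<open>s\<notin>m'\<close> m'(3)] n'(3) \<open>m'=n'\<close> by blast
      then show False using \<open>s'\<noteq>s3\<close> by simp
    qed
    have sub: "{la', lb', m', n'} \<subseteq> {l\<in>L. r\<in>l}" using la' lb' m' n' by blast
    have fin: "finite {l\<in>L. r \<in> l}" using lines_through_card[OF rP] by (intro card_ge_0_finite) simp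
    have "card {la', lb', m', n'} = 4" using d1 d2 d3 d4 d5 d6 by simp
    moreover have "card {la', lb', m', n'} \<le> 3" using card_mono[OF fin sub] lines_through_card[OF rP] by simp
    ultimately show ?thesis by simp
  qed
qed

lemma Reg: assumes a: "a\<in>P" and b: "b\<in>P" and nab: "\<not> R a b"
  and pqr: "p\<noteq>q" "p\<noteq>r" "q\<noteq>r"
  and h: "R a p" "R b p" "R a q" "R b q" "R a r" "R b r"
  and y: "R y q" "R y r"
  shows "R y p"
proof -
  obtain c where c: "c\<noteq>a" "c\<noteq>b" "R c p" "R c q" "R c r" using E3[OF a b nab pqr h] by blast
  have nqr: "\<not> R q r" by (rule nR[OF nab h(3-6) pqr(3)])
  have qP: "q \<in> P" "r \<in> P" using R_P h by blast+
  have G: "finite {c. R q c \<and> R r c} \<and> card {c. R q c \<and> R r c} \<le> 3" by (rule G6[OF qP nqr])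
  show ?thesis
  proof (rule ccontr)
    assume ny: "\<not> R y p"
    have "y \<noteq> a" using ny h(1) by blast
    have "y \<noteq> b" using ny h(2) by blast
    have "y \<noteq> c" using ny c(3) by blast
    have "a \<noteq> b" using nab R_refl a by blast
    have sub: "{a,b,c,y} \<subseteq> {c. R q c \<and> R r c}" using h c y R_sym by blast
    have "card {a,b,c,y} = 4" using \<open>y\<noteq>a\<close> \<open>y\<noteq>b\<close> \<open>y\<noteq>c\<close> \<open>a\<noteq>b\<close> c(1,2) by simp
    moreover have "card {a,b,c,y} \<le> 3" using card_mono[OF conjunct1[OF G] sub] G by simp
    ultimately show False by simp
  qed
qed

lemma H1: assumes d: "x\<noteq>y" "x\<noteq>z" "y\<noteq>z" "u\<noteq>v" "u\<noteq>w" "v\<noteq>w"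
  and h: "R x u" "R x v" "R x w" "R z u" "R z v" "R z w" "R y v" "R y w"
  shows "R y u"
proof (cases "R v w")
  case True
  then have "col v w" using R_col d(6) by blast
  then obtain l where l: "l\<in>L" "v\<in>l" "w\<in>l" using col_line_ex by blast
  have "x \<in> l" using G4[OF l d(6)] h(2,3) R_sym by blast
  have "y \<in> l" using G4[OF l d(6)] h(7,8) R_sym by blast
  have "z \<in> l" using G4[OF l d(6)] h(5,6) R_sym by blast
  have "u \<in> l" using G4[OF l(1) \<open>x\<in>l\<close> \<open>z\<in>l\<close> d(2)] h(1,4) by blast
  show ?thesis using R_line[OF l(1) \<open>y\<in>l\<close> \<open>u\<in>l\<close>] .
next
  case False
  have nxz: "\<not> R x z"
  proof
    assume "R x z"
    then have "col x z" using R_col d(2) by blast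
    then obtain l where l: "l\<in>L" "x\<in>l" "z\<in>l" using col_line_ex by blast
    have "v \<in> l" using G4[OF l d(2)] h(2,5) by blast
    have "w \<in> l" using G4[OF l d(2)] h(3,6) by blast
    show False using R_line[OF l(1) \<open>v\<in>l\<close> \<open>w\<in>l\<close>] False by simp
  qed
  have xP: "x\<in>P" "z\<in>P" using R_P h by blast+
  show ?thesis using Reg[OF xP nxz d(4,5,6) h(1,4,2,5,3,6) h(7,8)] .
qed

lemma H2: assumes h: "R x u" "R y v" "\<not> R x v" "\<not> R y u"
  shows "\<exists>z w. R z u \<and> R z v \<and> R x w \<and> R y w \<and> R z w"
proof (cases "x = u")
  case True
  have xP: "x\<in>P" "v\<in>P" "y\<in>P" using R_P h by blast+
  obtain c where c: "R x c" "R v c" using G5[OF xP(1,2)] by blast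
  have "c \<noteq> x" using c(2) h(3) R_sym by blast
  then have "col x c" using R_col c(1) by blast
  then obtain l where l: "l\<in>L" "x\<in>l" "c\<in>l" using col_line_ex by blast
  have "y \<notin> l" using R_line[OF l(1) _ l(2)] h(4) True by blast
  then obtain w where w: "w\<in>l" "col y w" using ax_ex[OF l(1) xP(3)] by blast
  have "R c u" using c(1) R_sym True by blast
  moreover have "R c v" using c(2) R_sym by blast
  moreover have "R x w" using R_line[OF l(1) l(2) w(1)] .
  moreover have "R y w" using col_R[OF w(2)] .
  moreover have "R c w" using R_line[OF l(1) l(3) w(1)] .
  ultimately show ?thesis by blast
next
  case False
  have xP: "x\<in>P" "v\<in>P" "y\<in>P" using R_P h by blast+
  have "col x u" using R_col h(1) False by blast
  then obtain l where l: "l\<in>L" "x\<in>l" "u\<in>l" using col_line_ex by blast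
  have "v \<notin> l" using R_line[OF l(1) l(2)] h(3) by blast
  have "y \<notin> l" using R_line[OF l(1) _ l(3)] h(4) by blast
  obtain s where s: "s\<in>l" "col v s" using ax_ex[OF l(1) xP(2) \<open>v\<notin>l\<close>] by blast
  obtain t where t: "t\<in>l" "col y t" using ax_ex[OF l(1) xP(3) \<open>y\<notin>l\<close>] by blast
  have "R s u" using R_line[OF l(1) s(1) l(3)] .
  moreover have "R s v" using col_R[OF s(2)] R_sym by blast
  moreover have "R x t" using R_line[OF l(1) l(2) t(1)] .
  moreover have "R y t" using col_R[OF t(2)] .
  moreover have "R s t" using R_line[OF l(1) s(1) t(1)] .
  ultimately show ?thesis by blast
qed

end

lemma collinear_sym: "collinear P L a b \<Longrightarrow> collinear P L b a"
  unfolding collinear_def by blast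

lemma gdist_le: "(a,b) \<in> coll_rel P L ^^ n \<Longrightarrow> gdist P L a b \<le> enat n"
  unfolding gdist_def by (rule INF_lower) simp

lemma gdist_ge: "(\<And>n. (a,b) \<in> coll_rel P L ^^ n \<Longrightarrow> k \<le> n) \<Longrightarrow> enat k \<le> gdist P L a b"
  unfolding gdist_def by (rule INF_greatest) simp

lemma relpow2: "R ^^ 2 = R O R" by (simp add: numeral_2_eq_2)

lemma dist_le1: "collinear P L a b \<Longrightarrow> gdist P L a b \<le> enat 1"
  by (rule gdist_le) (simp add: coll_rel_def)

lemma dist_le2: "collinear P L a c \<Longrightarrow> collinear P L c b \<Longrightarrow> gdist P L a b \<le> enat 2"
  by (rule gdist_le) (auto simp: coll_rel_def relpow2)

lemma dist_ge2: assumes "a \<noteq> b" "\<not> collinear P L a b" shows "enat (Suc 1) \<le> gdist P L a b"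
proof (rule gdist_ge)
  fix n assume n: "(a,b) \<in> coll_rel P L ^^ n"
  show "Suc 1 \<le> n"
  proof (rule ccontr)
    assume "\<not> Suc 1 \<le> n"
    then have "n = 0 \<or> n = 1" by linarith
    then show False using n assms by (auto simp: coll_rel_def)
  qed
qed

lemma dist_ge3: assumes "a \<noteq> b" "\<not> collinear P L a b" "\<And>c. \<not> (collinear P L a c \<and> collinear P L c b)"
  shows "enat (Suc 2) \<le> gdist P L a b"
proof (rule gdist_ge)
  fix n assume n: "(a,b) \<in> coll_rel P L ^^ n"
  show "Suc 2 \<le> n"
  proof (rule ccontr)
    assume "\<not> Suc 2 \<le> n"
    then have "n = 0 \<or> n = 1 \<or> n = 2" by linarith
    then show False using n assms by (auto simp: coll_rel_def relpow2)
  qed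
qed

lemma uniq_min:
  fixes d :: "'x \<Rightarrow> enat"
  assumes "p \<in> S" "d p \<le> enat k" "\<And>q. q\<in>S \<Longrightarrow> q \<noteq> p \<Longrightarrow> enat (Suc k) \<le> d q"
  shows "\<exists>!p. p \<in> S \<and> (\<forall>q\<in>S. d p \<le> d q)"
proof
  show "p \<in> S \<and> (\<forall>q\<in>S. d p \<le> d q)"
  proof (intro conjI ballI)
    show "p \<in> S" by fact
    fix q assume "q \<in> S"
    show "d p \<le> d q"
    proof (cases "q = p")
      case False
      have "enat k \<le> enat (Suc k)" by simp
      then show ?thesis using assms(2) assms(3)[OF \<open>q\<in>S\<close> False] by (meson order_trans)
    qed simp
  qed
  fix p2 assume p2: "p2 \<in> S \<and> (\<forall>q\<in>S. d p2 \<le> d q)"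
  show "p2 = p"
  proof (rule ccontr)
    assume "p2 \<noteq> p"
    then have "enat (Suc k) \<le> d p2" using assms(3) p2 by blast
    also have "d p2 \<le> d p" using p2 assms(1) by blast
    also have "d p \<le> enat k" by fact
    finally show False by simp
  qed
qed

locale two = S: gq P L + T: gq P' L' for P :: "'a set" and L and P' :: "'b set" and L' +
  fixes f :: "'a \<Rightarrow> 'b"
  assumes iso: "geom_iso f P L P' L'"
begin

lemma inj: "inj_on f P" using iso unfolding geom_iso_def bij_betw_def by blast
lemma img: "f ` P = P'" using iso unfolding geom_iso_def bij_betw_def by blast
lemma limg: "(image f) ` L = L'" using iso unfolding geom_iso_def by blast
lemma fP: "a \<in> P \<Longrightarrow> f a \<in> P'" using img by blast
lemma surj': "b \<in> P' \<Longrightarrow> \<exists>a\<in>P. b = f a" using img by blast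
lemma finj: "a \<in> P \<Longrightarrow> b \<in> P \<Longrightarrow> f a = f b \<longleftrightarrow> a = b" using inj unfolding inj_on_def by blast

lemma line_img: "l' \<in> L' \<Longrightarrow> \<exists>l\<in>L. l' = f ` l" using limg by blast
lemma line_img2: "l \<in> L \<Longrightarrow> f ` l \<in> L'" using limg by blast

lemma mem_img: "l \<in> L \<Longrightarrow> a \<in> P \<Longrightarrow> f a \<in> f ` l \<longleftrightarrow> a \<in> l"
proof -
  assume l: "l \<in> L" and a: "a \<in> P"
  have "l \<subseteq> P" using S.line_sub l by blast
  then show ?thesis using inj a unfolding inj_on_def by blast
qed

lemma col_tr: assumes a: "a \<in> P" and b: "b \<in> P"
  shows "T.col (f a) (f b) \<longleftrightarrow> S.col a b"
proof
  assume "T.col (f a) (f b)"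
  then obtain l' where l': "l'\<in>L'" "f a \<in> l'" "f b \<in> l'" "f a \<noteq> f b" using T.col_iff by blast
  obtain l where l: "l \<in> L" "l' = f ` l" using line_img l'(1) by blast
  have "a \<in> l" "b \<in> l" using mem_img[OF l(1)] a b l' l(2) by blast+
  moreover have "a \<noteq> b" using l'(4) by blast
  ultimately show "S.col a b" using S.col_line l(1) by blast
next
  assume "S.col a b"
  then obtain l where l: "l\<in>L" "a \<in> l" "b \<in> l" "a \<noteq> b" using S.col_iff by blast
  have "f a \<noteq> f b" using finj a b l(4) by blast
  then show "T.col (f a) (f b)" using T.col_line[OF line_img2[OF l(1)]] l(2,3) by blast
qed

lemma R_tr: assumes a: "a \<in> P" and b: "b \<in> P"
  shows "T.R (f a) (f b) \<longleftrightarrow> S.R a b"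
  using col_tr[OF a b] a b fP finj[OF a b] unfolding S.R_iff T.R_iff by blast

lemma perpset_eq: "perpset P L A = {y\<in>P. \<forall>a\<in>A. S.R a y}"
  unfolding perpset_def S.R_def by blast
lemma perpset_eq': "perpset P' L' A = {y\<in>P'. \<forall>a\<in>A. T.R a y}"
  unfolding perpset_def T.R_def by blast

lemma perpset_tr: assumes A: "A \<subseteq> P" shows "perpset P' L' (f ` A) = f ` perpset P L A"
proof
  show "perpset P' L' (f ` A) \<subseteq> f ` perpset P L A"
  proof
    fix y' assume y': "y' \<in> perpset P' L' (f ` A)"
    then have "y' \<in> P'" unfolding perpset_eq' by blast
    then obtain y where y: "y \<in> P" "y' = f y" using surj' by blast
    have "\<forall>a\<in>A. S.R a y" using y' y R_tr A unfolding perpset_eq' by blast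
    then show "y' \<in> f ` perpset P L A" using y unfolding perpset_eq by blast
  qed
next
  show "f ` perpset P L A \<subseteq> perpset P' L' (f ` A)"
  proof
    fix y' assume "y' \<in> f ` perpset P L A"
    then obtain y where y: "y \<in> perpset P L A" "y' = f y" by blast
    then have "y \<in> P" "\<forall>a\<in>A. S.R a y" unfolding perpset_eq by blast+
    then show "y' \<in> perpset P' L' (f ` A)" using y(2) R_tr A fP unfolding perpset_eq' by blast
  qed
qed

definition Q :: "'a \<Rightarrow> 'b \<Rightarrow> bool" where "Q x u \<longleftrightarrow> (x,u) \<in> calP P P' L' f"

lemma Q_iff: "Q x u \<longleftrightarrow> x \<in> P \<and> T.R (f x) u"
  unfolding Q_def calP_def T.R_def by blast

lemma Q_P: "Q x u \<Longrightarrow> x \<in> P \<and> u \<in> P'" unfolding Q_iff using T.R_P by blast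

lemma Q1: "x\<in>P \<Longrightarrow> y\<in>P \<Longrightarrow> \<exists>w. Q x w \<and> Q y w"
  unfolding Q_iff using T.G5 fP by blast

lemma Q2: assumes "u\<in>P'" "v\<in>P'" shows "\<exists>z. Q z u \<and> Q z v"
proof -
  obtain c where c: "T.R u c" "T.R v c" using T.G5 assms by blast
  then have "c \<in> P'" using T.R_P by blast
  then obtain z where "z \<in> P" "c = f z" using surj' by blast
  then show ?thesis using c T.R_sym unfolding Q_iff by blast
qed

lemma QH1: assumes d: "x\<noteq>y" "x\<noteq>z" "y\<noteq>z" "u\<noteq>v" "u\<noteq>w" "v\<noteq>w"
  and h: "Q x u" "Q x v" "Q x w" "Q z u" "Q z v" "Q z w" "Q y v" "Q y w"
  shows "Q y u"
proof -
  have P: "x \<in> P" "y \<in> P" "z \<in> P" using h Q_iff by blast+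
  have d': "f x \<noteq> f y" "f x \<noteq> f z" "f y \<noteq> f z" using finj P d by blast+
  have h': "T.R (f x) u" "T.R (f x) v" "T.R (f x) w" "T.R (f z) u" "T.R (f z) v" "T.R (f z) w"
    "T.R (f y) v" "T.R (f y) w" using h Q_iff by blast+
  show ?thesis using T.H1[OF d' d(4-6) h'] P(2) Q_iff by blast
qed

lemma QH2: assumes h: "Q x u" "Q y v" "\<not> Q x v" "\<not> Q y u"
  shows "\<exists>z w. Q z u \<and> Q z v \<and> Q x w \<and> Q y w \<and> Q z w"
proof -
  have P: "x \<in> P" "y \<in> P" using h Q_iff by blast+
  have h': "T.R (f x) u" "T.R (f y) v" "\<not> T.R (f x) v" "\<not> T.R (f y) u" using h P Q_iff by blast+
  obtain z' w where zw: "T.R z' u" "T.R z' v" "T.R (f x) w" "T.R (f y) w" "T.R z' w"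
    using T.H2[OF h'] by blast
  have "z' \<in> P'" using T.R_P zw(1) by blast
  then obtain z where z: "z \<in> P" "z' = f z" using surj' by blast
  show ?thesis using zw z P unfolding Q_iff by blast
qed

end

context two begin

lemma line_eq3: assumes "card l = 3" "a\<in>l" "b\<in>l" "c\<in>l" "a\<noteq>b" "a\<noteq>c" "b\<noteq>c"
  shows "l = {a,b,c}"
proof -
  have "finite l" using assms(1) by (intro card_ge_0_finite) simp
  moreover have "{a,b,c} \<subseteq> l" using assms by blast
  moreover have "card {a,b,c} = 3" using assms by simp
  ultimately show ?thesis using card_subset_eq assms(1) by metis
qed

lemma adj_line:
  assumes h: "Q x u" "Q y v" "x\<noteq>y" "u\<noteq>v" "Q x v" "Q y u"
  shows "\<exists>t s. {PP x u, PP y v, PP t s} \<in> calL P L P' L' f"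
proof -
  have P: "x \<in> P" "y \<in> P" using h Q_iff by blast+
  have h': "T.R (f x) u" "T.R (f y) v" "T.R (f x) v" "T.R (f y) u" using h Q_iff by blast+
  have dxy: "f x \<noteq> f y" using finj P h(3) by blast
  show ?thesis
  proof (cases "T.R (f x) (f y)")
    case True
    then have "T.col (f x) (f y)" using T.R_col dxy by blast
    then obtain l' where l': "l'\<in>L'" "f x \<in> l'" "f y \<in> l'" using T.col_line_ex by blast
    have uv: "u \<in> l'" "v \<in> l'" using T.G4[OF l' dxy] h' by blast+
    obtain l where l: "l\<in>L" "l' = f ` l" using line_img l'(1) by blast
    have xy: "x \<in> l" "y \<in> l" using mem_img[OF l(1)] P l'(2,3) l(2) by blast+
    obtain t where t: "t \<in> l" "t \<noteq> x" "t \<noteq> y" using S.third[OF l(1)] by blast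
    obtain s where s: "s \<in> l'" "s \<noteq> u" "s \<noteq> v" using T.third[OF l'(1)] by blast
    have leq: "l = {x,y,t}" using line_eq3[OF S.line_card[OF l(1)] xy t(1)] h(3) t(2,3) by metis
    have leq': "l' = {u,v,s}" using line_eq3[OF T.line_card[OF l'(1)] uv s(1)] h(4) s(2,3) by metis
    have tP: "t \<in> P" using S.line_sub l(1) t(1) by blast
    have "f t \<in> l'" using l(2) t(1) by blast
    then have Qts: "Q t s" using T.R_line[OF l'(1) _ s(1)] tP Q_iff by blast
    have pp: "perpset P' L' (f ` {x,y,t}) = {u,v,s}" using T.perpset_line[OF l'(1)] l(2) leq leq' by simp
    have "{x,y,t} \<in> L" using l leq by simp
    then have "{PP x u, PP y v, PP t s} \<in> calL P L P' L' f"
      unfolding calL_def using h(1,2) Qts h(3) t(2,3) pp h(4) s(2,3) unfolding Q_def by blast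
    then show ?thesis by blast
  next
    case False
    have fP: "f x \<in> P'" "f y \<in> P'" using fP P by blast+
    obtain s where s: "T.R (f x) s" "T.R (f y) s" "s \<noteq> u" "s \<noteq> v"
      using T.G7[OF fP False h'(1) h'(4) h'(3) h'(2) h(4)] by blast
    obtain c' where c': "c' \<noteq> f x" "c' \<noteq> f y" "T.R c' u" "T.R c' v" "T.R c' s"
      using T.E3[OF fP False h(4) s(3)[symmetric] s(4)[symmetric] h'(1) h'(4) h'(3) h'(2) s(1,2)] by blast
    have "c' \<in> P'" using T.R_P c'(3) by blast
    then obtain t where t: "t \<in> P" "c' = f t" using surj' by blast
    have txy: "t \<noteq> x" "t \<noteq> y" using c' t by blast+
    have Qts: "Q t s" using t c'(5) Q_iff by blast
    have G: "finite {c. T.R (f x) c \<and> T.R (f y) c} \<and> card {c. T.R (f x) c \<and> T.R (f y) c} \<le> 3"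
      by (rule T.G6[OF fP False])
    have pp: "perpset P' L' (f ` {x,y,t}) = {u,v,s}"
    proof
      show "{u,v,s} \<subseteq> perpset P' L' (f ` {x,y,t})"
        unfolding perpset_eq' using h' s c' t T.R_P T.R_sym by auto
      show "perpset P' L' (f ` {x,y,t}) \<subseteq> {u,v,s}"
      proof
        fix z assume z: "z \<in> perpset P' L' (f ` {x,y,t})"
        then have zr: "T.R (f x) z" "T.R (f y) z" unfolding perpset_eq' by auto
        show "z \<in> {u,v,s}"
        proof (rule ccontr)
          assume nz: "z \<notin> {u,v,s}"
          have sub: "{u,v,s,z} \<subseteq> {c. T.R (f x) c \<and> T.R (f y) c}" using zr h' s by blast
          have "card {u,v,s,z} = 4" using nz h(4) s(3,4) by auto
          moreover have "card {u,v,s,z} \<le> 3" using card_mono[OF conjunct1[OF G] sub] G by simp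
          ultimately show False by simp
        qed
      qed
    qed
    have nuv: "\<not> T.R u v" using T.nR[OF False h'(1) h'(4) h'(3) h'(2) h(4)] .
    have ru: "T.R u (f x)" "T.R v (f x)" "T.R u (f y)" "T.R v (f y)" "T.R u c'" "T.R v c'"
      using h' c' T.R_sym by blast+
    have n1: "\<not> T.R (f x) c'" using T.nR[OF nuv ru(1,2,5,6)] c'(1) by blast
    have n2: "\<not> T.R (f y) c'" using T.nR[OF nuv ru(3,4,5,6)] c'(2) by blast
    have ncol: "\<not> S.col x y" "\<not> S.col x t" "\<not> S.col y t"
      using col_tr P t(1) False n1 n2 T.col_R t(2) by metis+
    have sub: "{x,y,t} \<subseteq> P" using P t by blast
    have card3: "card {x,y,t} = 3" using h(3) txy by auto
    have "triad P L {x,y,t}"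
      unfolding triad_def using sub card3 ncol S.col_sym by blast
    moreover have "card (perpset P L {x,y,t}) = 3"
    proof -
      have "f ` perpset P L {x,y,t} = {u,v,s}" using perpset_tr[OF sub] pp by simp
      moreover have "inj_on f (perpset P L {x,y,t})"
        using inj by (rule inj_on_subset) (auto simp: perpset_def)
      ultimately show ?thesis using card_image h(4) s(3,4) by fastforce
    qed
    ultimately have "complete_triad P L {x,y,t}" unfolding complete_triad_def by blast
    then have "{PP x u, PP y v, PP t s} \<in> calL P L P' L' f"
      unfolding calL_def using h(1,2) Qts h(3) txy pp h(4) s(3,4) unfolding Q_def by blast
    then show ?thesis by blast
  qed
qed

end

context two begin

abbreviation "BP \<equiv> bbP P P' L' f"
abbreviation "BL \<equiv> bbL P L P' L' f"
abbreviation "bcol \<equiv> collinear BP BL"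

lemma inBP_PP[simp]: "PP x u \<in> BP \<longleftrightarrow> Q x u" unfolding bbP_def Q_def by auto
lemma inBP_PA[simp]: "PA a \<in> BP \<longleftrightarrow> a \<in> P" unfolding bbP_def by auto
lemma inBP_PB[simp]: "PB b \<in> BP \<longleftrightarrow> b \<in> P'" unfolding bbP_def by auto

lemma calL_pair: assumes l: "l \<in> calL P L P' L' f" and ab: "PP a b \<in> l" and cd: "PP c d \<in> l"
  shows "Q a d \<and> (PP a b \<noteq> PP c d \<longrightarrow> a \<noteq> c \<and> b \<noteq> d)"
proof -
  obtain x y z u v w where lx: "l = {PP x u, PP y v, PP z w}"
    and c: "(x, u) \<in> calP P P' L' f" "(y, v) \<in> calP P P' L' f" "(z, w) \<in> calP P P' L' f"
      "x \<noteq> y" "y \<noteq> z" "x \<noteq> z" "{u, v, w} = perpset P' L' (f ` {x, y, z})"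
      "u \<noteq> v" "v \<noteq> w" "u \<noteq> w"
    using l unfolding calL_def by blast
  have xP: "x \<in> P" "y \<in> P" "z \<in> P" using c(1-3) unfolding calP_def by blast+
  have pr: "\<forall>dd\<in>{u,v,w}. \<forall>aa\<in>{x,y,z}. Q aa dd"
  proof (intro ballI)
    fix dd aa assume dd: "dd \<in> {u,v,w}" and aa: "aa \<in> {x,y,z}"
    have "dd \<in> perpset P' L' (f ` {x, y, z})" using dd c(7) by simp
    then have "T.R (f aa) dd" using aa unfolding perpset_eq' by blast
    moreover have "aa \<in> P" using aa xP by blast
    ultimately show "Q aa dd" using Q_iff by blast
  qed
  have "a \<in> {x,y,z}" "d \<in> {u,v,w}" using ab cd lx by auto
  then have "Q a d" using pr by blast
  moreover have "PP a b \<noteq> PP c d \<longrightarrow> a \<noteq> c \<and> b \<noteq> d" using ab cd lx c(4-6,8-10) by auto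
  ultimately show ?thesis by blast
qed

lemma calL_noAB: "l \<in> calL P L P' L' f \<Longrightarrow> PA a \<notin> l \<and> PB b \<notin> l"
  unfolding calL_def by auto

lemma BL_cases: "l \<in> BL \<Longrightarrow> l \<in> calL P L P' L' f \<or> (\<exists>x u. Q x u \<and> l = {PA x, PP x u, PB u})"
  unfolding bbL_def Q_def by blast

lemma colPP[simp]: "bcol (PP x u) (PP y v) \<longleftrightarrow> Q x u \<and> Q y v \<and> x\<noteq>y \<and> u\<noteq>v \<and> Q x v \<and> Q y u"
proof
  assume "bcol (PP x u) (PP y v)"
  then obtain l where l: "l \<in> BL" "PP x u \<in> l" "PP y v \<in> l" and ne: "PP x u \<noteq> PP y v"
    and m: "Q x u" "Q y v" unfolding collinear_def by auto
  from BL_cases[OF l(1)] show "Q x u \<and> Q y v \<and> x\<noteq>y \<and> u\<noteq>v \<and> Q x v \<and> Q y u"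
  proof
    assume lc: "l \<in> calL P L P' L' f"
    show ?thesis using calL_pair[OF lc l(2) l(3)] calL_pair[OF lc l(3) l(2)] ne m by blast
  next
    assume "\<exists>a b. Q a b \<and> l = {PA a, PP a b, PB b}"
    then show ?thesis using l ne by auto
  qed
next
  assume h: "Q x u \<and> Q y v \<and> x\<noteq>y \<and> u\<noteq>v \<and> Q x v \<and> Q y u"
  then obtain t s where "{PP x u, PP y v, PP t s} \<in> calL P L P' L' f" using adj_line by blast
  then have "{PP x u, PP y v, PP t s} \<in> BL" unfolding bbL_def by blast
  then show "bcol (PP x u) (PP y v)" unfolding collinear_def using h by auto
qed

lemma colAA[simp]: "\<not> bcol (PA a) (PA b)"
proof
  assume "bcol (PA a) (PA b)"
  then obtain l where l: "l \<in> BL" "PA a \<in> l" "PA b \<in> l" and ne: "a \<noteq> b"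
    unfolding collinear_def by auto
  from BL_cases[OF l(1)] show False
  proof
    assume lc: "l \<in> calL P L P' L' f" then show False using calL_noAB l by blast
  next
    assume "\<exists>x u. Q x u \<and> l = {PA x, PP x u, PB u}"
    then show False using l ne by auto
  qed
qed

lemma colBB[simp]: "\<not> bcol (PB a) (PB b)"
proof
  assume "bcol (PB a) (PB b)"
  then obtain l where l: "l \<in> BL" "PB a \<in> l" "PB b \<in> l" and ne: "a \<noteq> b"
    unfolding collinear_def by auto
  from BL_cases[OF l(1)] show False
  proof
    assume lc: "l \<in> calL P L P' L' f" then show False using calL_noAB l by blast
  next
    assume "\<exists>x u. Q x u \<and> l = {PA x, PP x u, PB u}"
    then show False using l ne by auto
  qed
qed

lemma special_BL: "Q x u \<Longrightarrow> {PA x, PP x u, PB u} \<in> BL" unfolding bbL_def Q_def by blast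

lemma colAB[simp]: "bcol (PA a) (PB b) \<longleftrightarrow> Q a b"
proof
  assume "bcol (PA a) (PB b)"
  then obtain l where l: "l \<in> BL" "PA a \<in> l" "PB b \<in> l"
    unfolding collinear_def by auto
  from BL_cases[OF l(1)] show "Q a b"
  proof
    assume lc: "l \<in> calL P L P' L' f" then show ?thesis using calL_noAB l by blast
  next
    assume "\<exists>x u. Q x u \<and> l = {PA x, PP x u, PB u}"
    then show ?thesis using l by auto
  qed
next
  assume "Q a b"
  then show "bcol (PA a) (PB b)" unfolding collinear_def using special_BL[of a b] Q_P by auto
qed

lemma colAP[simp]: "bcol (PA a) (PP y v) \<longleftrightarrow> a = y \<and> Q y v"
proof
  assume "bcol (PA a) (PP y v)"
  then obtain l where l: "l \<in> BL" "PA a \<in> l" "PP y v \<in> l"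
    unfolding collinear_def by auto
  from BL_cases[OF l(1)] show "a = y \<and> Q y v"
  proof
    assume lc: "l \<in> calL P L P' L' f" then show ?thesis using calL_noAB l by blast
  next
    assume "\<exists>x u. Q x u \<and> l = {PA x, PP x u, PB u}"
    then show ?thesis using l by auto
  qed
next
  assume "a = y \<and> Q y v"
  then show "bcol (PA a) (PP y v)" unfolding collinear_def using special_BL[of y v] Q_P by auto
qed

lemma colBP[simp]: "bcol (PB b) (PP y v) \<longleftrightarrow> b = v \<and> Q y v"
proof
  assume "bcol (PB b) (PP y v)"
  then obtain l where l: "l \<in> BL" "PB b \<in> l" "PP y v \<in> l"
    unfolding collinear_def by auto
  from BL_cases[OF l(1)] show "b = v \<and> Q y v"
  proof
    assume lc: "l \<in> calL P L P' L' f" then show ?thesis using calL_noAB l by blast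
  next
    assume "\<exists>x u. Q x u \<and> l = {PA x, PP x u, PB u}"
    then show ?thesis using l by auto
  qed
next
  assume "b = v \<and> Q y v"
  then show "bcol (PB b) (PP y v)" unfolding collinear_def using special_BL[of y v] Q_P by auto
qed

lemma colBA[simp]: "bcol (PB b) (PA a) \<longleftrightarrow> Q a b" using colAB collinear_sym by metis
lemma colPA[simp]: "bcol (PP y v) (PA a) \<longleftrightarrow> a = y \<and> Q y v" using colAP collinear_sym by metis
lemma colPB[simp]: "bcol (PP y v) (PB b) \<longleftrightarrow> b = v \<and> Q y v" using colBP collinear_sym by metis

end

context two begin

lemma ge2: "a \<noteq> b \<Longrightarrow> \<not> bcol a b \<Longrightarrow> enat (Suc (Suc 0)) \<le> gdist BP BL a b"
  using dist_ge2[of a b BP BL] by simp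
lemma ge3: assumes "a \<noteq> b" "\<not> bcol a b" "\<And>c. \<not> (bcol a c \<and> bcol c b)"
  shows "enat 3 \<le> gdist BP BL a b"
proof -
  have "enat (Suc 2) \<le> gdist BP BL a b" by (rule dist_ge3[OF assms])
  then show ?thesis by simp
qed

lemma main:
  assumes xu: "Q x u" and al: "\<alpha> \<in> BP" and nal: "\<alpha> \<notin> {PA x, PP x u, PB u}"
  shows "\<exists>!p. p \<in> {PA x, PP x u, PB u} \<and>
           (\<forall>q \<in> {PA x, PP x u, PB u}. gdist BP BL \<alpha> p \<le> gdist BP BL \<alpha> q)"
proof -
  let ?S = "{PA x, PP x u, PB u}"
  have xP: "x \<in> P" "u \<in> P'" using Q_P xu by blast+
  show ?thesis
  proof (cases \<alpha>)
    case (PA y)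
    have yP: "y \<in> P" "y \<noteq> x" using al nal PA by auto
    show ?thesis
    proof (cases "Q y u")
      case True
      show ?thesis
      proof (rule uniq_min[where p = "PB u" and k = 1])
        show "PB u \<in> ?S" by simp
        show "gdist BP BL \<alpha> (PB u) \<le> enat 1" using dist_le1[of BP BL \<alpha> "PB u"] True PA by simp
        fix q assume "q \<in> ?S" "q \<noteq> PB u"
        then have "q = PA x \<or> q = PP x u" by blast
        then show "enat (Suc 1) \<le> gdist BP BL \<alpha> q" using PA yP by (auto intro!: ge2)
      qed
    next
      case False
      obtain w where w: "Q x w" "Q y w" using Q1 xP(1) yP(1) by blast
      show ?thesis
      proof (rule uniq_min[where p = "PA x" and k = 2])
        show "PA x \<in> ?S" by simp
        show "gdist BP BL \<alpha> (PA x) \<le> enat 2" using dist_le2[of BP BL "PA y" "PB w" "PA x"] w PA by simp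
        fix q assume "q \<in> ?S" "q \<noteq> PA x"
        then have "q = PP x u \<or> q = PB u" by blast
        moreover have "\<not> (bcol (PA y) c \<and> bcol c (PP x u))" for c
          using False yP by (cases c) auto
        moreover have "\<not> (bcol (PA y) c \<and> bcol c (PB u))" for c
          using False yP by (cases c) auto
        ultimately show "enat (Suc 2) \<le> gdist BP BL \<alpha> q" using PA yP False
          by (auto intro!: ge3)
      qed
    qed
  next
    case (PB v)
    have vP: "v \<in> P'" "v \<noteq> u" using al nal PB by auto
    show ?thesis
    proof (cases "Q x v")
      case True
      show ?thesis
      proof (rule uniq_min[where p = "PA x" and k = 1])
        show "PA x \<in> ?S" by simp
        show "gdist BP BL \<alpha> (PA x) \<le> enat 1" using dist_le1[of BP BL \<alpha> "PA x"] True PB by simp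
        fix q assume "q \<in> ?S" "q \<noteq> PA x"
        then have "q = PB u \<or> q = PP x u" by blast
        then show "enat (Suc 1) \<le> gdist BP BL \<alpha> q" using PB vP by (auto intro!: ge2)
      qed
    next
      case False
      obtain z where z: "Q z u" "Q z v" using Q2 xP(2) vP(1) by blast
      show ?thesis
      proof (rule uniq_min[where p = "PB u" and k = 2])
        show "PB u \<in> ?S" by simp
        show "gdist BP BL \<alpha> (PB u) \<le> enat 2" using dist_le2[of BP BL "PB v" "PA z" "PB u"] z PB by simp
        fix q assume "q \<in> ?S" "q \<noteq> PB u"
        then have "q = PP x u \<or> q = PA x" by blast
        moreover have "\<not> (bcol (PB v) c \<and> bcol c (PP x u))" for c
          using False vP by (cases c) auto
        moreover have "\<not> (bcol (PB v) c \<and> bcol c (PA x))" for c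
          using False vP by (cases c) auto
        ultimately show "enat (Suc 2) \<le> gdist BP BL \<alpha> q" using PB vP False
          by (auto intro!: ge3)
      qed
    qed
  next
    case (PP y v)
    have yv: "Q y v" "(y,v) \<noteq> (x,u)" using al nal PP by auto
    show ?thesis
    proof (cases "y = x")
      case True
      then have "v \<noteq> u" using yv by blast
      show ?thesis
      proof (rule uniq_min[where p = "PA x" and k = 1])
        show "PA x \<in> ?S" by simp
        show "gdist BP BL \<alpha> (PA x) \<le> enat 1" using dist_le1[of BP BL \<alpha> "PA x"] True PP yv by simp
        fix q assume "q \<in> ?S" "q \<noteq> PA x"
        then have "q = PB u \<or> q = PP x u" by blast
        then show "enat (Suc 1) \<le> gdist BP BL \<alpha> q" using PP True \<open>v\<noteq>u\<close> by (auto intro!: ge2)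
      qed
    next
      case yx: False
      show ?thesis
      proof (cases "v = u")
        case True
        show ?thesis
        proof (rule uniq_min[where p = "PB u" and k = 1])
          show "PB u \<in> ?S" by simp
          show "gdist BP BL \<alpha> (PB u) \<le> enat 1" using dist_le1[of BP BL \<alpha> "PB u"] True PP yv by simp
          fix q assume "q \<in> ?S" "q \<noteq> PB u"
          then have "q = PA x \<or> q = PP x u" by blast
          then show "enat (Suc 1) \<le> gdist BP BL \<alpha> q" using PP True yx by (auto intro!: ge2)
        qed
      next
        case vu: False
        show ?thesis
        proof (cases "Q x v \<and> Q y u")
          case True
          show ?thesis
          proof (rule uniq_min[where p = "PP x u" and k = 1])
            show "PP x u \<in> ?S" by simp
            show "gdist BP BL \<alpha> (PP x u) \<le> enat 1" using dist_le1[of BP BL \<alpha> "PP x u"] True PP yv xu yx vu by simp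
            fix q assume "q \<in> ?S" "q \<noteq> PP x u"
            then have "q = PA x \<or> q = PB u" by blast
            then show "enat (Suc 1) \<le> gdist BP BL \<alpha> q" using PP yx vu by (auto intro!: ge2)
          qed
        next
          case nadj: False
          show ?thesis
          proof (cases "Q x v")
            case True
            then have nyu: "\<not> Q y u" using nadj by blast
            show ?thesis
            proof (rule uniq_min[where p = "PA x" and k = 2])
              show "PA x \<in> ?S" by simp
              show "gdist BP BL \<alpha> (PA x) \<le> enat 2"
                using dist_le2[of BP BL "PP y v" "PB v" "PA x"] True yv PP by simp
              fix q assume "q \<in> ?S" "q \<noteq> PA x"
              then have "q = PP x u \<or> q = PB u" by blast
              moreover have "\<not> (bcol (PP y v) c \<and> bcol c (PB u))" for c
                using nyu vu by (cases c) auto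
              moreover have "\<not> (bcol (PP y v) c \<and> bcol c (PP x u))" for c
              proof (cases c)
                case (PP a b)
                show ?thesis
                proof
                  assume "bcol (PP y v) c \<and> bcol c (PP x u)"
                  then have h: "Q a b" "y\<noteq>a" "v\<noteq>b" "Q y b" "Q a v" "a\<noteq>x" "b\<noteq>u" "Q a u" "Q x b"
                    using PP by auto
                  have "Q y u" using QH1[of x y a u v b] yx vu h xu True yv by metis
                  then show False using nyu by simp
                qed
              qed (use yx vu in auto)
              ultimately show "enat (Suc 2) \<le> gdist BP BL \<alpha> q" using PP nadj yx vu nyu
                by (auto intro!: ge3)
            qed
          next
            case nxv: False
            show ?thesis
            proof (cases "Q y u")
              case True
              show ?thesis
              proof (rule uniq_min[where p = "PB u" and k = 2])
                show "PB u \<in> ?S" by simp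
                show "gdist BP BL \<alpha> (PB u) \<le> enat 2"
                  using dist_le2[of BP BL "PP y v" "PA y" "PB u"] True yv PP by simp
                fix q assume "q \<in> ?S" "q \<noteq> PB u"
                then have "q = PP x u \<or> q = PA x" by blast
                moreover have "\<not> (bcol (PP y v) c \<and> bcol c (PA x))" for c
                  using nxv yx by (cases c) auto
                moreover have "\<not> (bcol (PP y v) c \<and> bcol c (PP x u))" for c
                proof (cases c)
                  case (PP a b)
                  show ?thesis
                  proof
                    assume "bcol (PP y v) c \<and> bcol c (PP x u)"
                    then have h: "Q a b" "y\<noteq>a" "v\<noteq>b" "Q y b" "Q a v" "a\<noteq>x" "b\<noteq>u" "Q a u" "Q x b"
                      using PP by auto
                    have "Q x v" using QH1[of y x a v u b] yx vu h xu True yv by metis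
                    then show False using nxv by simp
                  qed
                qed (use yx vu in auto)
                ultimately show "enat (Suc 2) \<le> gdist BP BL \<alpha> q" using PP nadj yx vu nxv
                  by (auto intro!: ge3)
              qed
            next
              case nyu: False
              obtain z w where zw: "Q z u" "Q z v" "Q x w" "Q y w" "Q z w"
                using QH2[OF xu yv(1) nxv nyu] by blast
              have "z \<noteq> x" using zw(2) nxv by blast
              have "z \<noteq> y" using zw(1) nyu by blast
              have "w \<noteq> u" using zw(4) nyu by blast
              have "w \<noteq> v" using zw(3) nxv by blast
              show ?thesis
              proof (rule uniq_min[where p = "PP x u" and k = 2])
                show "PP x u \<in> ?S" by simp
                have "bcol (PP y v) (PP z w)" using zw yv \<open>z\<noteq>y\<close> \<open>w\<noteq>v\<close> by auto
                moreover have "bcol (PP z w) (PP x u)" using zw xu \<open>z\<noteq>x\<close> \<open>w\<noteq>u\<close> by auto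
                ultimately show "gdist BP BL \<alpha> (PP x u) \<le> enat 2"
                  using dist_le2 PP by metis
                fix q assume "q \<in> ?S" "q \<noteq> PP x u"
                then have "q = PA x \<or> q = PB u" by blast
                moreover have "\<not> (bcol (PP y v) c \<and> bcol c (PA x))" for c
                  using nxv yx by (cases c) auto
                moreover have "\<not> (bcol (PP y v) c \<and> bcol c (PB u))" for c
                  using nyu vu by (cases c) auto
                ultimately show "enat (Suc 2) \<le> gdist BP BL \<alpha> q" using PP yx vu
                  by (auto intro!: ge3)
              qed
            qed
          qed
        qed
      qed
    qed
  qed
qed

end

theorem proposition4p6:
  fixes P :: "'a set" and L :: "'a set set" and P' :: "'b set" and L' :: "'b set set"
    and f :: "'a \<Rightarrow> 'b" and x :: 'a and u :: 'b and \<alpha> :: "('a, 'b) spoint"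
  assumes "GQ22 P L" and "GQ22 P' L'" and "geom_iso f P L P' L'"
    and "(x, u) \<in> calP P P' L' f"
    and "\<alpha> \<in> bbP P P' L' f"
    and "\<alpha> \<notin> {PA x, PP x u, PB u}"
  shows "\<exists>!p. p \<in> {PA x, PP x u, PB u} \<and>
           (\<forall>q \<in> {PA x, PP x u, PB u}.
              gdist (bbP P P' L' f) (bbL P L P' L' f) \<alpha> p
                \<le> gdist (bbP P P' L' f) (bbL P L P' L' f) \<alpha> q)"
  proof -
  have "two P L P' L' f"
    unfolding two_def two_axioms_def gq_def using assms(1-3) by blast
  then interpret two P L P' L' f .
  have xu: "Q x u" using assms(4) unfolding Q_def .
  show ?thesis by (rule main[OF xu assms(5,6)])
qed

end
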